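(* For natural concepts $C_1,C_2,D_1,D_2$: $\{C_1:C_2::D_1:D_2\}\models C_2:C_1::D_2:D_1$, i.e. every model of the TBox consisting of the analogy assertion $C_1:C_2::D_1:D_2$ satisfies the analogy assertion $C_2:C_1::D_2:D_1$.
   Context: Concepts: $C,D::=\top\mid\bot\mid A\mid C\sqcap D\mid \exists r.C\mid N$; natural concepts: $N,N'::=A'\mid N\sqcap N'\mid N\bowtie N'\mid \exists r'.N$, with $A$ a concept name, $A'$ a natural concept name, $r$ a role name, $r'$ an intra-domain role name. A domain constrained interpretation is $\mathfrak{I}=(\mathcal{I},[\mathcal{F}_1,\dots,\mathcal{F}_k],\mathcal{X},\pi,\sim,\mathcal{S})$ where $\mathcal{I}=(\Delta^{\mathcal{I}},\cdot^{\mathcal{I}})$ is a classical DL interpretation, $[\mathcal{F}_1,\dots,\mathcal{F}_k]$ partitions a nonempty finite set $\mathcal{F}$, $\mathcal{X}\subseteq2^{\mathcal{F}}$ with $\mathcal{F}\in\mathcal{X}$, $\pi:\Delta^{\mathcal{I}}\to2^{\mathcal{F}}$, $\sim$ an equivalence relation on $\{1,\dots,k\}$, $\mathcal{S}=\{\sigma_{(s,t)}\mid(s,t)\in\sim\}$ with $\sigma_{(s,t)}:\mathcal{F}_s\to\mathcal{F}_t$ bijections. With $\mathcal{C}=\{G\subseteq\mathcal{F}\mid X\not\subseteq G\ \forall X\in\mathcal{X}\}$ and $\mathcal{C}^i=\{G\in\mathcal{C}\mid G\subseteq\mathcal{F}_i\}$ it is required: (1) $X\not\subseteq\pi(d)$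 for all $d$, $X\in\mathcal{X}$; (2) each $G\in\mathcal{C}$ is $\pi(d)$ for some $d$; (3) $\sigma_{(s,t)}^{-1}=\sigma_{(t,s)}$, $\sigma_{(t,u)}\circ\sigma_{(s,t)}=\sigma_{(s,u)}$; (4) $\sigma_{(i,j)}(G)\in\mathcal{C}$ for $G\in\mathcal{C}^i$, $(i,j)\in\sim$; (5) $\{f,g\}\in\mathcal{X}$ whenever $f\in\mathcal{F}_i$, $g\in\mathcal{F}_j$, $(i,j)\in\sim$, $i\neq j$. $\varphi(C)=\bigcap\{\pi(d)\mid d\in C^{\mathcal{I}}\}$ ($=\mathcal{F}$ if $C^{\mathcal{I}}=\emptyset$). Concepts are interpreted as usual, with $(N\bowtie N')^{\mathcal{I}}=\{d\mid\varphi(N)\cap\varphi(N')\subseteq\pi(d)\}$. An intra-domain relation $r$: there is $\kappa_r:2^{\mathcal{F}}\to2^{\mathcal{F}}$ with $(\exists r.C)^{\mathcal{I}}=\{d\mid\kappa_r(\varphi(C))\subseteq\pi(d)\}$ for all $C$, $\kappa_r(G)=\bigcup_i\kappa_r(G\cap\mathcal{F}_i)$ for $G\in\mathcal{C}$, $\kappa_r(G)\subseteq\mathcal{F}_i$ for $G\in\mathcal{C}^i$, $\kappa_r(\sigma_{(i,j)}(G))=\sigma_{(i,j)}(\kappa_r(G))$ for $(i,j)\in\sim$, $G\in\mathcal{C}^i$, and $\kappa_r(G)\neq\emptyset$ for $G\in\mathcal{C}^i\setminus\{\emptyset\}$. $\delta(C)=\{i\mid\mathcal{F}_i\cap\varphi(C)\neq\emptyset\}$.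 For $U=\{(s_1,t_1),\dots,(s_l,t_l)\}\subseteq\sim$ with pairwise distinct $s_i$ and pairwise distinct $t_i$, the domain translation $\sigma_U:\mathcal{F}\to\mathcal{F}$ maps $f\in\mathcal{F}_{s_i}$ to $\sigma_{(s_i,t_i)}(f)$ and fixes all other features; $\mathrm{src}(U)=\{s_i\}$, $\mathrm{tgt}(U)=\{t_i\}$. $\mu(C,D)$ is the set of $\sigma_U$ with $\varphi(D)=\sigma_U(\varphi(C))$, $\mathrm{src}(U)\subseteq\delta(C)$, $\mathrm{tgt}(U)\cap(\delta(C)\setminus\mathrm{src}(U))=\emptyset$. An analogy assertion $C_1:C_2::D_1:D_2$ (between natural concepts) is satisfied in $\mathfrak{I}$ iff $\mu(C_1,C_2)\cap\mu(D_1,D_2)\neq\emptyset$; a concept inclusion $C\sqsubseteq D$ is satisfied iff $C^{\mathcal{I}}\subseteq D^{\mathcal{I}}$. A TBox is a finite set of concept inclusions and analogy assertions. $\mathfrak{I}$ is a model of a TBox $\mathcal{T}$ if it satisfies all its elements, every natural concept $N$ in $\mathcal{T}$ satisfies $N^{\mathcal{I}}=\{d\mid\varphi(N)\subseteq\pi(d)\}$, and every intra-domain role name is interpreted as an intra-domain relation. $\mathcal{T}\models\psi$ means every model of $\mathcal{T}$ satisfies $\psi$. *)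

theory Defs
  imports Main
begin

text \<open>Concepts over concept names 'c and role names 'r. The constructor Join is the
  operator written with bowtie; it is only well-formed between natural concepts.\<close>

datatype ('c, 'r) concept =
    Top | Bot | CN 'c
  | Conj "('c, 'r) concept" "('c, 'r) concept"
  | Ex 'r "('c, 'r) concept"
  | Join "('c, 'r) concept" "('c, 'r) concept"

inductive natural :: "'c set \<Rightarrow> 'r set \<Rightarrow> ('c, 'r) concept \<Rightarrow> bool"
  for NN :: "'c set" and IR :: "'r set" where
  nat_name: "A \<in> NN \<Longrightarrow> natural NN IR (CN A)"
| nat_conj: "natural NN IR N \<Longrightarrow> natural NN IR N' \<Longrightarrow> natural NN IR (Conj N N')"
| nat_join: "natural NN IR N \<Longrightarrow> natural NN IR N' \<Longrightarrow> natural NN IR (Join N N')"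
| nat_ex: "r \<in> IR \<Longrightarrow> natural NN IR N \<Longrightarrow> natural NN IR (Ex r N)"

fun subconcepts :: "('c, 'r) concept \<Rightarrow> ('c, 'r) concept set" where
  "subconcepts Top = {Top}"
| "subconcepts Bot = {Bot}"
| "subconcepts (CN A) = {CN A}"
| "subconcepts (Conj C D) = insert (Conj C D) (subconcepts C \<union> subconcepts D)"
| "subconcepts (Ex r C) = insert (Ex r C) (subconcepts C)"
| "subconcepts (Join C D) = insert (Join C D) (subconcepts C \<union> subconcepts D)"

datatype ('c, 'r) axiom =
    Incl "('c, 'r) concept" "('c, 'r) concept"
  | Analogy "('c, 'r) concept" "('c, 'r) concept" "('c, 'r) concept" "('c, 'r) concept"

fun ax_concepts :: "('c, 'r) axiom \<Rightarrow> ('c, 'r) concept set" where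
  "ax_concepts (Incl C D) = subconcepts C \<union> subconcepts D"
| "ax_concepts (Analogy C1 C2 D1 D2) =
     subconcepts C1 \<union> subconcepts C2 \<union> subconcepts D1 \<union> subconcepts D2"

text \<open>Domain indices are 1..k; part i is the feature set F_i; sigma s t is the
  bijection sigma_(s,t) : F_s -> F_t.\<close>

record ('d, 'c, 'r, 'f) dci =
  Delta :: "'d set"
  cI :: "'c \<Rightarrow> 'd set"
  rI :: "'r \<Rightarrow> ('d \<times> 'd) set"
  Feat :: "'f set"
  k :: nat
  part :: "nat \<Rightarrow> 'f set"
  Xc :: "'f set set"
  pi :: "'d \<Rightarrow> 'f set"
  sim :: "(nat \<times> nat) set"
  sigma :: "nat \<Rightarrow> nat \<Rightarrow> 'f \<Rightarrow> 'f"

definition consistent :: "('d, 'c, 'r, 'f) dci \<Rightarrow> 'f set set" where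
  "consistent I = {G. G \<subseteq> Feat I \<and> (\<forall>X\<in>Xc I. \<not> X \<subseteq> G)}"

definition consistent_in :: "('d, 'c, 'r, 'f) dci \<Rightarrow> nat \<Rightarrow> 'f set set" where
  "consistent_in I i = {G \<in> consistent I. G \<subseteq> part I i}"

definition is_dci :: "('d, 'c, 'r, 'f) dci \<Rightarrow> bool" where
  "is_dci I \<longleftrightarrow>
     \<comment> \<open>classical interpretation\<close>
     Delta I \<noteq> {} \<and> (\<forall>A. cI I A \<subseteq> Delta I) \<and> (\<forall>r. rI I r \<subseteq> Delta I \<times> Delta I) \<and>
     \<comment> \<open>[F_1,...,F_k] partitions a nonempty finite set F\<close>
     finite (Feat I) \<and> Feat I \<noteq> {} \<and>
     (\<forall>i\<in>{1..k I}. part I i \<noteq> {}) \<and>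
     (\<forall>i\<in>{1..k I}. \<forall>j\<in>{1..k I}. i \<noteq> j \<longrightarrow> part I i \<inter> part I j = {}) \<and>
     (\<Union>i\<in>{1..k I}. part I i) = Feat I \<and>
     \<comment> \<open>X is a subset of 2^F containing F\<close>
     (\<forall>X\<in>Xc I. X \<subseteq> Feat I) \<and> Feat I \<in> Xc I \<and>
     \<comment> \<open>pi maps into 2^F\<close>
     (\<forall>d\<in>Delta I. pi I d \<subseteq> Feat I) \<and>
     \<comment> \<open>sim is an equivalence relation on 1..k\<close>
     equiv {1..k I} (sim I) \<and>
     \<comment> \<open>the sigma are bijections F_s -> F_t\<close>
     (\<forall>(s,t)\<in>sim I. bij_betw (sigma I s t) (part I s) (part I t)) \<and>
     \<comment> \<open>(1)\<close>
     (\<forall>d\<in>Delta I. \<forall>X\<in>Xc I. \<not> X \<subseteq> pi I d) \<and>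
     \<comment> \<open>(2)\<close>
     (\<forall>G\<in>consistent I. \<exists>d\<in>Delta I. pi I d = G) \<and>
     \<comment> \<open>(3)\<close>
     (\<forall>(s,t)\<in>sim I. \<forall>f\<in>part I s. sigma I t s (sigma I s t f) = f) \<and>
     (\<forall>s t u. (s,t) \<in> sim I \<longrightarrow> (t,u) \<in> sim I \<longrightarrow>
        (\<forall>f\<in>part I s. sigma I t u (sigma I s t f) = sigma I s u f)) \<and>
     \<comment> \<open>(4)\<close>
     (\<forall>(i,j)\<in>sim I. \<forall>G\<in>consistent_in I i. sigma I i j ` G \<in> consistent I) \<and>
     \<comment> \<open>(5)\<close>
     (\<forall>(i,j)\<in>sim I. i \<noteq> j \<longrightarrow>
        (\<forall>f\<in>part I i. \<forall>g\<in>part I j. {f, g} \<in> Xc I))"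

fun ext :: "('d, 'c, 'r, 'f) dci \<Rightarrow> ('c, 'r) concept \<Rightarrow> 'd set" where
  "ext I Top = Delta I"
| "ext I Bot = {}"
| "ext I (CN A) = cI I A"
| "ext I (Conj C D) = ext I C \<inter> ext I D"
| "ext I (Ex r C) = {d \<in> Delta I. \<exists>e. (d, e) \<in> rI I r \<and> e \<in> ext I C}"
| "ext I (Join N N') =
     {d \<in> Delta I. (Feat I \<inter> \<Inter>(pi I ` ext I N)) \<inter> (Feat I \<inter> \<Inter>(pi I ` ext I N'))
                    \<subseteq> pi I d}"

definition phi :: "('d, 'c, 'r, 'f) dci \<Rightarrow> ('c, 'r) concept \<Rightarrow> 'f set" where
  "phi I C = Feat I \<inter> \<Inter>(pi I ` ext I C)"

definition intra_domain :: "('d, 'c, 'r, 'f) dci \<Rightarrow> 'r \<Rightarrow> bool" where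
  "intra_domain I r \<longleftrightarrow> (\<exists>\<kappa> :: 'f set \<Rightarrow> 'f set.
     (\<forall>C. ext I (Ex r C) = {d \<in> Delta I. \<kappa> (phi I C) \<subseteq> pi I d}) \<and>
     (\<forall>G\<in>consistent I. \<kappa> G = (\<Union>i\<in>{1..k I}. \<kappa> (G \<inter> part I i))) \<and>
     (\<forall>i\<in>{1..k I}. \<forall>G\<in>consistent_in I i. \<kappa> G \<subseteq> part I i) \<and>
     (\<forall>(i,j)\<in>sim I. \<forall>G\<in>consistent_in I i. \<kappa> (sigma I i j ` G) = sigma I i j ` \<kappa> G) \<and>
     (\<forall>i\<in>{1..k I}. \<forall>G\<in>consistent_in I i - {{}}. \<kappa> G \<noteq> {}))"

definition delta :: "('d, 'c, 'r, 'f) dci \<Rightarrow> ('c, 'r) concept \<Rightarrow> nat set" where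
  "delta I C = {i \<in> {1..k I}. part I i \<inter> phi I C \<noteq> {}}"

definition admissible_U :: "('d, 'c, 'r, 'f) dci \<Rightarrow> (nat \<times> nat) set \<Rightarrow> bool" where
  "admissible_U I U \<longleftrightarrow> U \<subseteq> sim I \<and> inj_on fst U \<and> inj_on snd U"

definition sigmaU :: "('d, 'c, 'r, 'f) dci \<Rightarrow> (nat \<times> nat) set \<Rightarrow> 'f \<Rightarrow> 'f" where
  "sigmaU I U f =
     (if \<exists>p\<in>U. f \<in> part I (fst p)
      then (let p = (SOME p. p \<in> U \<and> f \<in> part I (fst p)) in sigma I (fst p) (snd p) f)
      else f)"

definition mu :: "('d, 'c, 'r, 'f) dci \<Rightarrow> ('c, 'r) concept \<Rightarrow> ('c, 'r) concept
                   \<Rightarrow> ('f \<Rightarrow> 'f) set" where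
  "mu I C D = {sigmaU I U | U. admissible_U I U \<and>
       phi I D = sigmaU I U ` phi I C \<and>
       fst ` U \<subseteq> delta I C \<and>
       snd ` U \<inter> (delta I C - fst ` U) = {}}"

fun sat_ax :: "('d, 'c, 'r, 'f) dci \<Rightarrow> ('c, 'r) axiom \<Rightarrow> bool" where
  "sat_ax I (Incl C D) \<longleftrightarrow> ext I C \<subseteq> ext I D"
| "sat_ax I (Analogy C1 C2 D1 D2) \<longleftrightarrow> mu I C1 C2 \<inter> mu I D1 D2 \<noteq> {}"

definition is_model ::
  "'c set \<Rightarrow> 'r set \<Rightarrow> ('d, 'c, 'r, 'f) dci \<Rightarrow> ('c, 'r) axiom set \<Rightarrow> bool" where
  "is_model NN IR I T \<longleftrightarrow>
     is_dci I \<and>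
     (\<forall>ax\<in>T. sat_ax I ax) \<and>
     (\<forall>ax\<in>T. \<forall>N\<in>ax_concepts ax. natural NN IR N \<longrightarrow>
        ext I N = {d \<in> Delta I. phi I N \<subseteq> pi I d}) \<and>
     (\<forall>r\<in>IR. intra_domain I r)"

end

theory Submission
  imports Defs
begin

definition dl :: "('d, 'c, 'r, 'f) dci \<Rightarrow> 'f set \<Rightarrow> nat set" where
  "dl I A = {i \<in> {1..k I}. part I i \<inter> A \<noteq> {}}"

lemma dci_equiv: "is_dci I \<Longrightarrow> equiv {1..k I} (sim I)"
  unfolding is_dci_def apply (elim conjE) by assumption

lemma dci_bij: "is_dci I \<Longrightarrow> (s,t) \<in> sim I \<Longrightarrow> bij_betw (sigma I s t) (part I s) (part I t)"
proof -
  assume a: "is_dci I" "(s,t) \<in> sim I"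
  have "\<forall>(s,t)\<in>sim I. bij_betw (sigma I s t) (part I s) (part I t)"
    using a(1) unfolding is_dci_def by (elim conjE) assumption
  thus ?thesis using a(2) by blast
qed
lemma dci_inv: "is_dci I \<Longrightarrow> (s,t) \<in> sim I \<Longrightarrow> f \<in> part I s \<Longrightarrow> sigma I t s (sigma I s t f) = f"
proof -
  assume a: "is_dci I" "(s,t) \<in> sim I" "f \<in> part I s"
  have "\<forall>(s,t)\<in>sim I. \<forall>f\<in>part I s. sigma I t s (sigma I s t f) = f"
    using a(1) unfolding is_dci_def by (elim conjE) assumption
  thus ?thesis using a(2,3) by blast
qed
lemma dci_trans: "is_dci I \<Longrightarrow> (s,t) \<in> sim I \<Longrightarrow> (t,u) \<in> sim I \<Longrightarrow> f \<in> part I s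
   \<Longrightarrow> sigma I t u (sigma I s t f) = sigma I s u f"
proof -
  assume a: "is_dci I" "(s,t) \<in> sim I" "(t,u) \<in> sim I" "f \<in> part I s"
  have "\<forall>s t u. (s,t) \<in> sim I \<longrightarrow> (t,u) \<in> sim I \<longrightarrow>
        (\<forall>f\<in>part I s. sigma I t u (sigma I s t f) = sigma I s u f)"
    using a(1) unfolding is_dci_def by (elim conjE) assumption
  thus ?thesis using a(2-4) by blast
qed
lemma dci_disj: "is_dci I \<Longrightarrow> i \<in> {1..k I} \<Longrightarrow> j \<in> {1..k I} \<Longrightarrow> f \<in> part I i \<Longrightarrow> f \<in> part I j
  \<Longrightarrow> i = j"
proof -
  assume a: "is_dci I" "i \<in> {1..k I}" "j \<in> {1..k I}" "f \<in> part I i" "f \<in> part I j"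
  have "\<forall>i\<in>{1..k I}. \<forall>j\<in>{1..k I}. i \<noteq> j \<longrightarrow> part I i \<inter> part I j = {}"
    using a(1) unfolding is_dci_def by (elim conjE) assumption
  thus ?thesis using a(2-5) by blast
qed
lemma dci_ne: "is_dci I \<Longrightarrow> i \<in> {1..k I} \<Longrightarrow> part I i \<noteq> {}"
proof -
  assume a: "is_dci I" "i \<in> {1..k I}"
  have "\<forall>i\<in>{1..k I}. part I i \<noteq> {}"
    using a(1) unfolding is_dci_def by (elim conjE) assumption
  thus ?thesis using a(2) by blast
qed
lemma dci_sim: assumes "is_dci I" "(s,t) \<in> sim I"
  shows "s \<in> {1..k I}" "t \<in> {1..k I}" "(t,s) \<in> sim I"
    "bij_betw (sigma I s t) (part I s) (part I t)"
    "\<And>f. f \<in> part I s \<Longrightarrow> sigma I t s (sigma I s t f) = f"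
proof -
  have e: "equiv {1..k I} (sim I)" using dci_equiv[OF assms(1)] .
  have "sim I \<subseteq> {1..k I} \<times> {1..k I}" using e unfolding equiv_def refl_on_def by blast
  then show "s \<in> {1..k I}" "t \<in> {1..k I}" using assms(2) by blast+
  show "(t,s) \<in> sim I" using e assms(2) unfolding equiv_def sym_def by blast
  show "bij_betw (sigma I s t) (part I s) (part I t)" using dci_bij assms by blast
  show "\<And>f. f \<in> part I s \<Longrightarrow> sigma I t s (sigma I s t f) = f"
    by (rule dci_inv[OF assms])
qed

lemma sigmaU_in:
  assumes "is_dci I" "admissible_U I U" "(s,t) \<in> U" "f \<in> part I s"
  shows "sigmaU I U f = sigma I s t f"
proof -
  have U: "U \<subseteq> sim I" "inj_on fst U" using assms(2) unfolding admissible_U_def by auto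
  have ex: "\<exists>p\<in>U. f \<in> part I (fst p)" using assms(3,4) by (intro bexI[of _ "(s,t)"]) auto
  have uniq: "p = (s,t)" if "p \<in> U" "f \<in> part I (fst p)" for p
  proof -
    obtain a b where p: "p = (a,b)" by (cases p)
    have "(a,b) \<in> sim I" using U(1) that(1) p by blast
    hence ak: "a \<in> {1..k I}" by (rule dci_sim(1)[OF assms(1)])
    have "(s,t) \<in> sim I" using U(1) assms(3) by blast
    hence sk: "s \<in> {1..k I}" by (rule dci_sim(1)[OF assms(1)])
    have "f \<in> part I a" using that(2) p by simp
    hence "a = s" by (rule dci_disj[OF assms(1) ak sk _ assms(4)])
    hence "fst p = fst (s,t)" using p by simp
    thus ?thesis using U(2) that(1) assms(3) unfolding inj_on_def by blast
  qed
  have "(SOME p. p \<in> U \<and> f \<in> part I (fst p)) = (s,t)"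
    by (rule some_equality) (use assms(3,4) in simp, use uniq in blast)
  thus ?thesis using ex unfolding sigmaU_def by simp
qed

lemma sigmaU_out:
  assumes "\<forall>p\<in>U. f \<notin> part I (fst p)"
  shows "sigmaU I U f = f"
  using assms unfolding sigmaU_def by auto

lemma main:
  assumes dci: "is_dci I" and adm: "admissible_U I U" and AF: "A \<subseteq> Feat I"
    and B: "B = sigmaU I U ` A" and c1: "fst ` U \<subseteq> dl I A"
    and c2: "snd ` U \<inter> (dl I A - fst ` U) = {}"
  shows "admissible_U I (converse U)" "A = sigmaU I (converse U) ` B"
    "fst ` (converse U) \<subseteq> dl I B"
    "snd ` (converse U) \<inter> (dl I B - fst ` (converse U)) = {}"
proof -
  have U: "U \<subseteq> sim I" "inj_on fst U" "inj_on snd U" using adm unfolding admissible_U_def by auto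
  show adm': "admissible_U I (converse U)"
    unfolding admissible_U_def
  proof (intro conjI)
    show "converse U \<subseteq> sim I" using U dci_sim(3)[OF dci] by auto
    show "inj_on fst (converse U)" using U(3) unfolding inj_on_def by fastforce
    show "inj_on snd (converse U)" using U(2) unfolding inj_on_def by fastforce
  qed
  have bk: "sigmaU I (converse U) (sigmaU I U f) = f" if fA: "f \<in> A" for f
  proof (cases "\<exists>p\<in>U. f \<in> part I (fst p)")
    case True
    then obtain s t where st: "(s,t) \<in> U" "f \<in> part I s" by auto
    have "sigmaU I U f = sigma I s t f" using sigmaU_in[OF dci adm st] .
    moreover have "sigma I s t f \<in> part I t"
      using dci_sim(4)[OF dci] st U(1) unfolding bij_betw_def by blast
    ultimately show ?thesis using sigmaU_in[OF dci adm', of t s] st dci_sim(5)[OF dci, of s t f] U(1)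
      by auto
  next
    case False
    hence e: "sigmaU I U f = f" by (simp add: sigmaU_out)
    have "\<forall>p\<in>converse U. f \<notin> part I (fst p)"
    proof (rule ccontr)
      assume "\<not> ?thesis"
      then obtain s t where st: "(s,t) \<in> U" "f \<in> part I t" by auto
      have "t \<in> {1..k I}" using dci_sim(2)[OF dci] st U(1) by blast
      hence "t \<in> dl I A" using st fA unfolding dl_def by auto
      moreover have "t \<notin> fst ` U" using False st by force
      moreover have "t \<in> snd ` U" using st by force
      ultimately show False using c2 by blast
    qed
    thus ?thesis using e by (simp add: sigmaU_out)
  qed
  show "A = sigmaU I (converse U) ` B"
    unfolding B image_comp using bk by (auto simp: image_iff)
  show "fst ` (converse U) \<subseteq> dl I B"
  proof
    fix t assume "t \<in> fst ` (converse U)"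
    then obtain s where st: "(s,t) \<in> U" by force
    have "s \<in> dl I A" using c1 st by force
    then obtain f where f: "f \<in> part I s" "f \<in> A" unfolding dl_def by auto
    have "sigmaU I U f = sigma I s t f" using sigmaU_in[OF dci adm st(1) f(1)] .
    moreover have "sigma I s t f \<in> part I t"
      using dci_sim(4)[OF dci] st U(1) f unfolding bij_betw_def by blast
    moreover have "t \<in> {1..k I}" using dci_sim(2)[OF dci] st U(1) by blast
    moreover have "sigmaU I U f \<in> B" using f(2) B by simp
    ultimately have "sigmaU I U f \<in> part I t \<inter> B" "t \<in> {1..k I}" by auto
    then show "t \<in> dl I B" unfolding dl_def by blast
  qed
  show "snd ` (converse U) \<inter> (dl I B - fst ` (converse U)) = {}"
  proof (rule ccontr)
    assume "\<not> ?thesis"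
    then obtain s where s: "s \<in> fst ` U" "s \<in> dl I B" "s \<notin> snd ` U" by force
    then obtain g where g: "g \<in> part I s" "g \<in> B" and sk: "s \<in> {1..k I}" unfolding dl_def by auto
    then obtain f where f: "f \<in> A" "g = sigmaU I U f" using B by auto
    show False
    proof (cases "\<exists>p\<in>U. f \<in> part I (fst p)")
      case True
      then obtain s' t' where st: "(s',t') \<in> U" "f \<in> part I s'" by auto
      have "g = sigma I s' t' f" using sigmaU_in[OF dci adm st] f by simp
      hence "g \<in> part I t'"
        using dci_sim(4)[OF dci] st U(1) unfolding bij_betw_def by blast
      moreover have "t' \<in> {1..k I}" using dci_sim(2)[OF dci] st U(1) by blast
      ultimately have "s = t'" using dci_disj[OF dci sk] g by blast
      thus False using s st by force
    next
      case False
      hence "g = f" using f by (simp add: sigmaU_out)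
      thus False using False s g by force
    qed
  qed
qed

lemma sigma_refl: assumes "is_dci I" "(s,s) \<in> sim I" "f \<in> part I s"
  shows "sigma I s s f = f"
proof -
  have "sigma I s s (sigma I s s f) = sigma I s s f" using dci_trans[OF assms(1,2,2,3)] .
  moreover have "sigma I s s (sigma I s s f) = f" using dci_sim(5)[OF assms(1,2,3)] .
  ultimately show ?thesis by simp
qed

lemma sigmaU_noId:
  assumes dci: "is_dci I" and adm: "admissible_U I W"
  shows "sigmaU I W f = sigmaU I (W - Id) f"
proof -
  have W: "W \<subseteq> sim I" "inj_on fst W" using adm unfolding admissible_U_def by auto
  have adm': "admissible_U I (W - Id)" using adm unfolding admissible_U_def
    by (auto intro: inj_on_subset)
  show ?thesis
  proof (cases "\<exists>p\<in>W. f \<in> part I (fst p)")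
    case True
    then obtain s t where st: "(s,t) \<in> W" "f \<in> part I s" by auto
    show ?thesis
    proof (cases "s = t")
      case False
      thus ?thesis using sigmaU_in[OF dci adm st] sigmaU_in[OF dci adm', of s t f] st by auto
    next
      case True
      have "sigmaU I W f = f" using sigmaU_in[OF dci adm st] sigma_refl[OF dci, of s f] st W(1) True
        by auto
      moreover have "\<forall>p\<in>W - Id. f \<notin> part I (fst p)"
      proof (intro ballI notI)
        fix p assume p: "p \<in> W - Id" "f \<in> part I (fst p)"
        have "fst p \<in> {1..k I}" using p W(1) dci_sim(1)[OF dci, of "fst p" "snd p"] by auto
        moreover have "s \<in> {1..k I}" using st W(1) dci_sim(1)[OF dci] by blast
        ultimately have "fst p = s" using dci_disj[OF dci] p st by blast
        hence "p = (s,t)" using W(2) p st unfolding inj_on_def by force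
        thus False using p True by auto
      qed
      ultimately show ?thesis by (simp add: sigmaU_out)
    qed
  next
    case False
    thus ?thesis by (auto simp: sigmaU_out)
  qed
qed

lemma sameU:
  assumes dci: "is_dci I" and adm: "admissible_U I U" and admV: "admissible_U I V"
    and eq: "sigmaU I U = sigmaU I V" and st: "(s,t) \<in> U" and ne: "s \<noteq> t"
  shows "(s,t) \<in> V"
proof -
  have U: "U \<subseteq> sim I" using adm unfolding admissible_U_def by auto
  have V: "V \<subseteq> sim I" using admV unfolding admissible_U_def by auto
  have sk: "s \<in> {1..k I}" "t \<in> {1..k I}" using st U dci_sim(1,2)[OF dci] by blast+
  have "part I s \<noteq> {}" using dci_ne[OF dci sk(1)] .
  then obtain f where f: "f \<in> part I s" by blast
  have hf: "sigmaU I V f \<in> part I t"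
    using sigmaU_in[OF dci adm st f] eq dci_sim(4)[OF dci] st U f unfolding bij_betw_def by force
  show ?thesis
  proof (cases "\<exists>p\<in>V. f \<in> part I (fst p)")
    case True
    then obtain s' t' where st': "(s',t') \<in> V" "f \<in> part I s'" by auto
    have k': "s' \<in> {1..k I}" "t' \<in> {1..k I}" using st' V dci_sim(1,2)[OF dci] by blast+
    have "s' = s" using dci_disj[OF dci k'(1) sk(1)] st' f by blast
    moreover have "sigmaU I V f \<in> part I t'"
      using sigmaU_in[OF dci admV st'] dci_sim(4)[OF dci] st' V unfolding bij_betw_def by force
    hence "t' = t" using dci_disj[OF dci k'(2) sk(2)] hf by blast
    ultimately show ?thesis using st' by simp
  next
    case False
    hence "sigmaU I V f = f" by (simp add: sigmaU_out)
    hence "s = t" using dci_disj[OF dci sk] hf f by simp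
    thus ?thesis using ne by simp
  qed
qed

lemma delta_dl: "delta I C = dl I (phi I C)"
  unfolding delta_def dl_def by simp

theorem proposition5:
  fixes NN :: "'c set" and IR :: "'r set"
    and I :: "('d, 'c, 'r, 'f) dci"
    and C1 C2 D1 D2 :: "('c, 'r) concept"
  assumes "natural NN IR C1" "natural NN IR C2" "natural NN IR D1" "natural NN IR D2"
    and "is_model NN IR I {Analogy C1 C2 D1 D2}"
  shows "sat_ax I (Analogy C2 C1 D2 D1)"
proof -
  have dci: "is_dci I" and sat: "mu I C1 C2 \<inter> mu I D1 D2 \<noteq> {}"
    using assms(5) unfolding is_model_def by auto
  then obtain h where h: "h \<in> mu I C1 C2" "h \<in> mu I D1 D2" by blast
  obtain U where U: "h = sigmaU I U" "admissible_U I U" "phi I C2 = sigmaU I U ` phi I C1"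
    "fst ` U \<subseteq> delta I C1" "snd ` U \<inter> (delta I C1 - fst ` U) = {}"
    using h(1) unfolding mu_def by blast
  obtain V where V: "h = sigmaU I V" "admissible_U I V" "phi I D2 = sigmaU I V ` phi I D1"
    "fst ` V \<subseteq> delta I D1" "snd ` V \<inter> (delta I D1 - fst ` V) = {}"
    using h(2) unfolding mu_def by blast
  have F: "phi I C \<subseteq> Feat I" for C unfolding phi_def by auto
  note m1 = main[OF dci U(2) F U(3), unfolded delta_dl[symmetric], OF U(4) U(5)]
  note m2 = main[OF dci V(2) F V(3), unfolded delta_dl[symmetric], OF V(4) V(5)]
  have "sigmaU I (converse U) \<in> mu I C2 C1" unfolding mu_def using m1 by blast
  moreover have "sigmaU I (converse V) \<in> mu I D2 D1" unfolding mu_def using m2 by blast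
  moreover have "sigmaU I (converse U) = sigmaU I (converse V)"
  proof
    fix f
    have "U - Id = V - Id" using sameU[OF dci U(2) V(2)] sameU[OF dci V(2) U(2)] U(1) V(1)
      by auto
    hence "converse U - Id = converse V - Id" by auto
    thus "sigmaU I (converse U) f = sigmaU I (converse V) f"
      using sigmaU_noId[OF dci m1(1)] sigmaU_noId[OF dci m2(1)] by metis
  qed
  ultimately show ?thesis by auto
qed

end
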